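(* Let $E=(E^0,E^1,r,s)$ be a graph. If $E$ has no cycles and $E$ has a countable (finite or countably infinite) number of shift-tail equivalence classes of boundary paths, then $E$ contains a line point.
   Context: A graph $E=(E^0,E^1,r,s)$ has vertex set $E^0$, edge set $E^1$, range and source maps. A cycle is a path $e_1\cdots e_n$ ($n\ge1$, $r(e_i)=s(e_{i+1})$) with $s(e_1)=r(e_n)$. A vertex is singular if it emits no edges or infinitely many edges. Boundary paths: infinite paths $e_1e_2\cdots$ together with finite paths (including vertices as length-$0$ paths) whose range is singular. The shift $\sigma_E$ removes the first edge (fixes vertices; sends a single edge $e$ to $r(e)$); boundary paths $\alpha,\beta$ are shift-tail equivalent if $\sigma_E^m(\alpha)=\sigma_E^n(\beta)$ for some $m,n\in\mathbb{N}$. For $v\in E^0$, $T(v)$ is the set of vertices reachable from $v$ by a path (including $v$). A bifurcation vertex emits at least two edges. $v$ is a line point if $T(v)$ contains no bifurcation vertex and no vertex of $T(v)$ lies on a cycle. *)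

theory Defs
  imports Main "HOL-Library.Countable_Set"
begin

text \<open>A directed graph E = (E0, E1, r, s): vertex set V, edge set Ed, range r, source s.\<close>

definition graph :: "'v set \<Rightarrow> 'e set \<Rightarrow> ('e \<Rightarrow> 'v) \<Rightarrow> ('e \<Rightarrow> 'v) \<Rightarrow> bool" where
  "graph V Ed r s \<longleftrightarrow> (\<forall>e\<in>Ed. r e \<in> V \<and> s e \<in> V)"

definition fpath :: "'e set \<Rightarrow> ('e \<Rightarrow> 'v) \<Rightarrow> ('e \<Rightarrow> 'v) \<Rightarrow> 'e list \<Rightarrow> bool" where
  "fpath Ed r s es \<longleftrightarrow> es \<noteq> [] \<and> set es \<subseteq> Ed \<and>
     (\<forall>i. Suc i < length es \<longrightarrow> r (es ! i) = s (es ! Suc i))"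

definition ipath :: "'e set \<Rightarrow> ('e \<Rightarrow> 'v) \<Rightarrow> ('e \<Rightarrow> 'v) \<Rightarrow> (nat \<Rightarrow> 'e) \<Rightarrow> bool" where
  "ipath Ed r s f \<longleftrightarrow> (\<forall>n. f n \<in> Ed \<and> r (f n) = s (f (Suc n)))"

definition is_cycle :: "'e set \<Rightarrow> ('e \<Rightarrow> 'v) \<Rightarrow> ('e \<Rightarrow> 'v) \<Rightarrow> 'e list \<Rightarrow> bool" where
  "is_cycle Ed r s es \<longleftrightarrow> fpath Ed r s es \<and> s (hd es) = r (last es)"

definition singular :: "'e set \<Rightarrow> ('e \<Rightarrow> 'v) \<Rightarrow> 'v \<Rightarrow> bool" where
  "singular Ed s v \<longleftrightarrow> {e\<in>Ed. s e = v} = {} \<or> infinite {e\<in>Ed. s e = v}"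

text \<open>Paths: vertices (length 0), nonempty finite edge lists, infinite edge sequences.\<close>
datatype ('v, 'e) gpath = PVert 'v | PFin "'e list" | PInf "nat \<Rightarrow> 'e"

definition boundary_paths :: "'v set \<Rightarrow> 'e set \<Rightarrow> ('e \<Rightarrow> 'v) \<Rightarrow> ('e \<Rightarrow> 'v) \<Rightarrow> ('v, 'e) gpath set" where
  "boundary_paths V Ed r s =
     {PVert v | v. v \<in> V \<and> singular Ed s v}
   \<union> {PFin es | es. fpath Ed r s es \<and> singular Ed s (r (last es))}
   \<union> {PInf f | f. ipath Ed r s f}"

fun shift :: "('e \<Rightarrow> 'v) \<Rightarrow> ('v, 'e) gpath \<Rightarrow> ('v, 'e) gpath" where
  "shift r (PVert v) = PVert v"
| "shift r (PFin []) = PFin []"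
| "shift r (PFin [e]) = PVert (r e)"
| "shift r (PFin (e # e' # es)) = PFin (e' # es)"
| "shift r (PInf f) = PInf (\<lambda>n. f (Suc n))"

definition tail_equiv :: "'v set \<Rightarrow> 'e set \<Rightarrow> ('e \<Rightarrow> 'v) \<Rightarrow> ('e \<Rightarrow> 'v) \<Rightarrow> ('v, 'e) gpath rel" where
  "tail_equiv V Ed r s = {(\<alpha>, \<beta>). \<alpha> \<in> boundary_paths V Ed r s \<and> \<beta> \<in> boundary_paths V Ed r s \<and>
      (\<exists>m n. (shift r ^^ m) \<alpha> = (shift r ^^ n) \<beta>)}"

definition T :: "'v set \<Rightarrow> 'e set \<Rightarrow> ('e \<Rightarrow> 'v) \<Rightarrow> ('e \<Rightarrow> 'v) \<Rightarrow> 'v \<Rightarrow> 'v set" where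
  "T V Ed r s v = {w. (w = v \<and> v \<in> V) \<or>
      (\<exists>es. fpath Ed r s es \<and> s (hd es) = v \<and> r (last es) = w)}"

definition bifurcation :: "'e set \<Rightarrow> ('e \<Rightarrow> 'v) \<Rightarrow> 'v \<Rightarrow> bool" where
  "bifurcation Ed s v \<longleftrightarrow> (\<exists>e1\<in>Ed. \<exists>e2\<in>Ed. e1 \<noteq> e2 \<and> s e1 = v \<and> s e2 = v)"

definition on_cycle :: "'e set \<Rightarrow> ('e \<Rightarrow> 'v) \<Rightarrow> ('e \<Rightarrow> 'v) \<Rightarrow> 'v \<Rightarrow> bool" where
  "on_cycle Ed r s v \<longleftrightarrow> (\<exists>es. is_cycle Ed r s es \<and> v \<in> s ` set es)"

definition line_point :: "'v set \<Rightarrow> 'e set \<Rightarrow> ('e \<Rightarrow> 'v) \<Rightarrow> ('e \<Rightarrow> 'v) \<Rightarrow> 'v \<Rightarrow> bool" where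
  "line_point V Ed r s v \<longleftrightarrow> v \<in> V \<and>
     (\<forall>w\<in>T V Ed r s v. \<not> bifurcation Ed s w \<and> \<not> on_cycle Ed r s w)"

end

theory Submission
  imports Defs
begin

lemma uncountable_bits: "\<not> countable (UNIV :: (nat \<Rightarrow> bool) set)"
proof
  assume "countable (UNIV :: (nat \<Rightarrow> bool) set)"
  then obtain f :: "nat \<Rightarrow> nat \<Rightarrow> bool" where "range f = UNIV"
    using uncountable_def by blast
  then have "(\<lambda>k. \<not> f k k) \<in> range f" by simp
  then obtain n where n: "(\<lambda>k. \<not> f k k) = f n" by blast
  have "(\<not> f n n) = f n n" using fun_cong[OF n, of n] by simp
  then show False by blast
qed

lemma shift_pow_PInf: "(shift r ^^ m) (PInf f) = PInf (\<lambda>k. f (k + m))"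
  by (induction m) auto

locale constr =
  fixes V :: "'v set" and Ed :: "'e set" and r s :: "'e \<Rightarrow> 'v"
    and v0 :: 'v and B :: "'v \<Rightarrow> bool" and e1 e2 nx :: "'v \<Rightarrow> 'e"
  assumes v0: "v0 \<in> V"
    and bif: "\<And>u. u \<in> V \<Longrightarrow> B u \<Longrightarrow> e1 u \<in> Ed \<and> e2 u \<in> Ed \<and> e1 u \<noteq> e2 u \<and> s (e1 u) = u \<and> s (e2 u) = u"
    and nbif: "\<And>u. u \<in> V \<Longrightarrow> \<not> B u \<Longrightarrow> (\<exists>e\<in>Ed. s e = u) \<Longrightarrow> nx u \<in> Ed \<and> s (nx u) = u"
    and uniq: "\<And>u e. u \<in> V \<Longrightarrow> \<not> B u \<Longrightarrow> e \<in> Ed \<Longrightarrow> s e = u \<Longrightarrow> e = nx u"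
    and rV: "\<And>e. e \<in> Ed \<Longrightarrow> r e \<in> V"
    and reach: "\<And>u. u \<in> V \<Longrightarrow> \<not> B u \<Longrightarrow> \<exists>es. fpath Ed r s es \<and> s (hd es) = u \<and> B (r (last es))"
begin

definition edge :: "(nat \<Rightarrow> bool) \<Rightarrow> 'v \<times> nat \<Rightarrow> 'e" where
  "edge x st = (if B (fst st) then (if x (snd st) then e1 (fst st) else e2 (fst st)) else nx (fst st))"

fun st :: "(nat \<Rightarrow> bool) \<Rightarrow> nat \<Rightarrow> 'v \<times> nat" where
  "st x 0 = (v0, 0)"
| "st x (Suc n) = (r (edge x (st x n)), if B (fst (st x n)) then Suc (snd (st x n)) else snd (st x n))"

definition alpha :: "(nat \<Rightarrow> bool) \<Rightarrow> nat \<Rightarrow> 'e" where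
  "alpha x n = edge x (st x n)"

lemma nonsing: "u \<in> V \<Longrightarrow> \<not> B u \<Longrightarrow> nx u \<in> Ed \<and> s (nx u) = u"
proof -
  assume a: "u \<in> V" "\<not> B u"
  then obtain es where "fpath Ed r s es" "s (hd es) = u" using reach by blast
  then have "hd es \<in> Ed" unfolding fpath_def by (cases es) auto
  then show ?thesis using nbif a \<open>s (hd es) = u\<close> by blast
qed

lemma st_V: "fst (st x n) \<in> V \<and> edge x (st x n) \<in> Ed \<and> s (edge x (st x n)) = fst (st x n)"
proof (induction n)
  case 0
  then show ?case using v0 bif nonsing by (auto simp: edge_def)
next
  case (Suc n)
  then have "fst (st x (Suc n)) \<in> V" using rV by simp
  then show ?case using bif nonsing by (auto simp: edge_def)
qed

lemma ipath_alpha: "ipath Ed r s (alpha x)"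
  unfolding ipath_def alpha_def
proof
  fix n
  have a: "s (edge x (st x (Suc n))) = fst (st x (Suc n))" using st_V by blast
  have b: "fst (st x (Suc n)) = r (edge x (st x n))" by simp
  show "edge x (st x n) \<in> Ed \<and> r (edge x (st x n)) = s (edge x (st x (Suc n)))"
  proof
    show "edge x (st x n) \<in> Ed" using st_V by blast
    show "r (edge x (st x n)) = s (edge x (st x (Suc n)))" using a b by simp
  qed
qed

lemma progress_aux:
  "fpath Ed r s es \<Longrightarrow> s (hd es) = fst (st x n) \<Longrightarrow> B (r (last es)) \<Longrightarrow> \<exists>n'\<ge>n. B (fst (st x n'))"
proof (induction es arbitrary: n)
  case Nil
  then show ?case by (simp add: fpath_def)
next
  case (Cons e es)
  show ?case
  proof (cases "B (fst (st x n))")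
    case True
    then show ?thesis by blast
  next
    case False
    have eE: "e \<in> Ed" using Cons.prems by (simp add: fpath_def)
    have "e = nx (fst (st x n))" using uniq[OF _ False eE] st_V Cons.prems by simp
    then have nxt: "fst (st x (Suc n)) = r e" using False by (simp add: edge_def)
    show ?thesis
    proof (cases es)
      case Nil
      then show ?thesis using Cons.prems nxt by (metis last_ConsL le_SucI order_refl)
    next
      case (Cons e' es')
      have fp: "fpath Ed r s es" using Cons.prems(1) \<open>es = e' # es'\<close>
        unfolding fpath_def by (auto simp: nth_Cons_Suc)
      have "r e = s (hd es)" using Cons.prems(1) \<open>es = e' # es'\<close> unfolding fpath_def by force
      then obtain n' where "n' \<ge> Suc n" "B (fst (st x n'))"
        using Cons.IH[OF fp, of "Suc n"] nxt Cons.prems(3) \<open>es = e' # es'\<close> by auto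
      then show ?thesis by (meson Suc_leD)
    qed
  qed
qed

lemma progress: "\<exists>n'\<ge>n. B (fst (st x n'))"
proof (cases "B (fst (st x n))")
  case True then show ?thesis by blast
next
  case False
  then obtain es where "fpath Ed r s es" "s (hd es) = fst (st x n)" "B (r (last es))"
    using reach st_V by blast
  then show ?thesis using progress_aux by blast
qed

lemma counter_unbounded: "\<exists>n. snd (st x n) \<ge> k"
proof (induction k)
  case 0 then show ?case by simp
next
  case (Suc k)
  then obtain n where "snd (st x n) \<ge> k" by blast
  obtain n' where "n' \<ge> n" "B (fst (st x n'))" using progress by blast
  have mono: "snd (st x a) \<le> snd (st x (a + d))" for a d
    by (induction d) (auto intro: le_trans)
  have "snd (st x n') \<ge> k" using mono[of n "n' - n"] \<open>n' \<ge> n\<close> \<open>snd (st x n) \<ge> k\<close> by simp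
  then have "snd (st x (Suc n')) \<ge> Suc k" using \<open>B (fst (st x n'))\<close> by simp
  then show ?case by blast
qed

lemma hits: "\<exists>n. snd (st x n) = k \<and> B (fst (st x n))"
proof -
  obtain n where n: "snd (st x n) \<ge> Suc k" using counter_unbounded by blast
  define m where "m = (LEAST n. snd (st x n) \<ge> Suc k)"
  have m: "snd (st x m) \<ge> Suc k" unfolding m_def by (rule LeastI[of _ n]) (rule n)
  have "m \<noteq> 0"
  proof
    assume "m = 0" then show False using m by simp
  qed
  then obtain p where p: "m = Suc p" by (cases m) auto
  have "\<not> snd (st x p) \<ge> Suc k" using not_less_Least[of p "\<lambda>n. snd (st x n) \<ge> Suc k"] p m_def by simp
  then show ?thesis using m p by (auto split: if_splits intro!: exI[of _ p])
qed

lemma alpha_inj: assumes "alpha x = alpha y" shows "x = y"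
proof -
  have same: "st x n = st y n" for n
  proof (induction n)
    case 0 then show ?case by simp
  next
    case (Suc n)
    have "edge x (st x n) = edge y (st y n)" using assms unfolding alpha_def by metis
    then show ?case using Suc by simp
  qed
  show ?thesis
  proof
    fix k
    obtain n where "snd (st x n) = k" "B (fst (st x n))" using hits by blast
    moreover have "edge x (st x n) = edge y (st y n)" using assms unfolding alpha_def by metis
    moreover have "e1 (fst (st x n)) \<noteq> e2 (fst (st x n))" using bif st_V calculation(2) by blast
    ultimately show "x k = y k" using same[of n] by (auto simp: edge_def split: if_splits)
  qed
qed

lemma prefix: assumes "\<forall>i<m. x i = y i" shows "\<forall>n<m. alpha x n = alpha y n"
proof -
  have H: "n \<le> m \<longrightarrow> st x n = st y n \<and> snd (st x n) \<le> n" for n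
  proof (induction n)
    case 0 then show ?case by simp
  next
    case (Suc n)
    show ?case
    proof
      assume "Suc n \<le> m"
      then have "st x n = st y n" "snd (st x n) < m" "snd (st x n) \<le> n" using Suc by auto
      then have "edge x (st x n) = edge y (st y n)" using assms by (simp add: edge_def)
      then show "st x (Suc n) = st y (Suc n) \<and> snd (st x (Suc n)) \<le> Suc n"
        using \<open>st x n = st y n\<close> \<open>snd (st x n) \<le> n\<close> by simp
    qed
  qed
  show ?thesis
  proof (intro allI impI)
    fix n assume "n < m"
    then have "st x n = st y n" "snd (st x n) < m" using H[of n] by auto
    then show "alpha x n = alpha y n" using assms by (simp add: alpha_def edge_def)
  qed
qed

lemma countable_S: "countable {y. \<forall>k. alpha y (k + n) = g k}"
proof (rule countable_image_inj_on[where f = "\<lambda>y. map y [0..<n]"])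
  have "countable (UNIV :: bool list set)" by (rule countableI_type)
  then show "countable ((\<lambda>y. map y [0..<n]) ` {y. \<forall>k. alpha y (k + n) = g k})"
    by (rule countable_subset[rotated]) simp
  show "inj_on (\<lambda>y. map y [0..<n]) {y. \<forall>k. alpha y (k + n) = g k}"
  proof
    fix y z assume y: "y \<in> {y. \<forall>k. alpha y (k + n) = g k}" and z: "z \<in> {y. \<forall>k. alpha y (k + n) = g k}"
      and eq: "map y [0..<n] = map z [0..<n]"
    then have "\<forall>i<n. y i = z i" by (simp add: map_eq_conv)
    then have p: "\<forall>k<n. alpha y k = alpha z k" by (rule prefix)
    have "alpha y = alpha z"
    proof
      fix k show "alpha y k = alpha z k"
      proof (cases "k < n")
        case True then show ?thesis using p by simp
      next
        case False
        then have kk: "k = (k - n) + n" by simp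
        have "alpha y ((k - n) + n) = g (k - n)" "alpha z ((k - n) + n) = g (k - n)" using y z by auto
        then show ?thesis using kk by simp
      qed
    qed
    then show "y = z" by (rule alpha_inj)
  qed
qed

end

theorem lemma4p7:
  fixes V :: "'v set" and Ed :: "'e set" and r s :: "'e \<Rightarrow> 'v"
  assumes "graph V Ed r s"
    and "V \<noteq> {}"
    and "\<not> (\<exists>es. is_cycle Ed r s es)"
    and "countable (boundary_paths V Ed r s // tail_equiv V Ed r s)"
  shows "\<exists>v\<in>V. line_point V Ed r s v"
proof (rule ccontr)
  assume nl: "\<not> (\<exists>v\<in>V. line_point V Ed r s v)"
  obtain v0 where v0: "v0 \<in> V" using assms(2) by blast
  define B where "B = bifurcation Ed s"
  define P where "P u = (SOME p. fst p \<in> Ed \<and> snd p \<in> Ed \<and> fst p \<noteq> snd p \<and> s (fst p) = u \<and> s (snd p) = u)" for u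
  define e1 where "e1 u = fst (P u)" for u
  define e2 where "e2 u = snd (P u)" for u
  define nx where "nx u = (SOME e. e \<in> Ed \<and> s e = u)" for u
  interpret constr V Ed r s v0 B e1 e2 nx
  proof
    show "v0 \<in> V" by (rule v0)
  next
    fix u assume "u \<in> V" "B u"
    then have "\<exists>p. fst p \<in> Ed \<and> snd p \<in> Ed \<and> fst p \<noteq> snd p \<and> s (fst p) = u \<and> s (snd p) = u"
      unfolding B_def bifurcation_def by (metis fst_conv snd_conv)
    from someI_ex[OF this] show "e1 u \<in> Ed \<and> e2 u \<in> Ed \<and> e1 u \<noteq> e2 u \<and> s (e1 u) = u \<and> s (e2 u) = u"
      unfolding e1_def e2_def P_def by blast
  next
    fix u assume "u \<in> V" "\<not> B u" "\<exists>e\<in>Ed. s e = u"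
    then have "\<exists>e. e \<in> Ed \<and> s e = u" by blast
    from someI_ex[OF this] show "nx u \<in> Ed \<and> s (nx u) = u" unfolding nx_def .
  next
    fix u e assume a: "u \<in> V" "\<not> B u" "e \<in> Ed" "s e = u"
    then have "\<exists>e. e \<in> Ed \<and> s e = u" by blast
    from someI_ex[OF this] have "nx u \<in> Ed \<and> s (nx u) = u" unfolding nx_def .
    then show "e = nx u" using a unfolding B_def bifurcation_def by blast
  next
    fix e assume "e \<in> Ed" then show "r e \<in> V" using assms(1) unfolding graph_def by blast
  next
    fix u assume u: "u \<in> V" "\<not> B u"
    then have "\<not> line_point V Ed r s u" using nl by blast
    then obtain w where w: "w \<in> T V Ed r s u" "bifurcation Ed s w \<or> on_cycle Ed r s w"
      unfolding line_point_def using u by blast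
    then have bw: "B w" using assms(3) unfolding on_cycle_def B_def by blast
    then have "w \<noteq> u" using u by blast
    then show "\<exists>es. fpath Ed r s es \<and> s (hd es) = u \<and> B (r (last es))"
      using w(1) bw unfolding T_def by blast
  qed
  define Q where "Q = boundary_paths V Ed r s // tail_equiv V Ed r s"
  define g where "g x = tail_equiv V Ed r s `` {PInf (alpha x)}" for x
  have bp: "PInf (alpha x) \<in> boundary_paths V Ed r s" for x
    using ipath_alpha unfolding boundary_paths_def by blast
  have gQ: "g ` UNIV \<subseteq> Q" unfolding g_def Q_def using bp by (auto intro: quotientI)
  have fib: "countable (g -` {g x0})" for x0
  proof (rule countable_subset)
    show "g -` {g x0} \<subseteq> (\<Union>m. \<Union>n. {y. \<forall>k. alpha y (k + n) = alpha x0 (k + m)})"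
    proof
      fix y assume "y \<in> g -` {g x0}"
      then have eq: "g y = g x0" by simp
      have "(PInf (alpha y), PInf (alpha y)) \<in> tail_equiv V Ed r s"
        unfolding tail_equiv_def using bp by (auto intro!: exI[of _ 0])
      then have "PInf (alpha y) \<in> g y" unfolding g_def by simp
      then have "PInf (alpha y) \<in> g x0" using eq by simp
      then have "(PInf (alpha x0), PInf (alpha y)) \<in> tail_equiv V Ed r s" unfolding g_def by simp
      then obtain m n where "(shift r ^^ m) (PInf (alpha x0)) = (shift r ^^ n) (PInf (alpha y))"
        unfolding tail_equiv_def by blast
      then have "(\<lambda>k. alpha x0 (k + m)) = (\<lambda>k. alpha y (k + n))" by (simp add: shift_pow_PInf)
      then have "\<forall>k. alpha y (k + n) = alpha x0 (k + m)" by (simp add: fun_eq_iff)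
      then show "y \<in> (\<Union>m. \<Union>n. {y. \<forall>k. alpha y (k + n) = alpha x0 (k + m)})" by blast
    qed
    show "countable (\<Union>m. \<Union>n. {y. \<forall>k. alpha y (k + n) = alpha x0 (k + m)})"
      by (intro countable_UN countableI_type countable_S)
  qed
  have "(UNIV :: (nat \<Rightarrow> bool) set) = (\<Union>C\<in>g ` UNIV. g -` {C})" by blast
  moreover have "countable (\<Union>C\<in>g ` UNIV. g -` {C})"
  proof (rule countable_UN)
    show "countable (g ` UNIV)" using countable_subset[OF gQ] assms(4) unfolding Q_def .
    fix C assume "C \<in> g ` UNIV"
    then obtain x0 where "C = g x0" by blast
    then show "countable (g -` {C})" using fib by simp
  qed
  ultimately have "countable (UNIV :: (nat \<Rightarrow> bool) set)" by simp
  then show False using uncountable_bits by blast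
qed

end
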